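(* Let $m,n\ge 1$, $r=\lceil\log_2 n\rceil$, and let $H\subseteq[n]$ be a set of holes. Consider the binary $\mathrm{PHP}^m_{|H|}$ in which each pigeon may go to a hole in $H$ only. Then any Sherali–Adams refutation of this formula involves a term that mentions at least $|H|$ pigeons.
   Context: Binary Pigeonhole Principle: pigeons $[m]$, holes $[n]$, an injective assignment of $r$-bit strings $\mathrm{bin}(a)=a_1\dots a_r$ to holes $a\in[n]$. Variables $P_{i,j}$ ($i\in[m]$, $j\in[r]$), $P_{i,j}$ being the $j$th bit of pigeon $i$'s hole; $X^1=X$, $X^0=\neg X$. Clauses: for every hole $a$ and pigeons $i\neq i'$, $\bigvee_{j=1}^r P_{i,j}^{1-a_j}\vee\bigvee_{j=1}^r P_{i',j}^{1-a_j}$. In the version where each pigeon may go to a hole in $H$ only, additionally for each pigeon $i$ and each $r$-bit string $c_1\dots c_r$ not equal to $\mathrm{bin}(a)$ for any $a\in H$, the clause $\bigvee_{j=1}^r P_{i,j}^{1-c_j}$. Sherali–Adams (SA): for every conjunction $D$ of literals (as a set; $\emptyset$ empty) there is a real variable (term) $Z_D$, $Z_\emptyset=1$. A lift by $D$ of a clause $l_1\vee\dots\vee l_t$ is $Z_{l_1\wedge D}+\dots+Z_{l_t\wedge D}\ge Z_D$; lifts of negation equalities are $Z_{v\wedge D}+Z_{\neg v\wedge D}=Z_D$; lifted bounds are $0\le Z_{l\wedge D}\le Z_D$. An SA refutation is a set of such lifted constraints (by conjunctions $D$ of any size) whose common real solution set is empty; it involves a term if that term occurs in one of its constraints. A term $Z_D$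 mentions pigeon $i$ if $D$ contains a literal of some variable $P_{i,j}$. *)

theory Defs
  imports Complex_Main
begin

text \<open>Variables: pairs (i,j) standing for P_{i,j} (pigeon i, bit j).
  Literals: (v, True) is v, (v, False) is the negation of v.
  Conjunctions D are sets of literals; a term is Z_D, an assignment of reals
  to all conjunctions is Z :: lit set \<Rightarrow> real.\<close>

type_synonym var = "nat \<times> nat"
type_synonym lit = "var \<times> bool"

text \<open>X^e for a bit e (True = 1): X^1 = X, X^0 = not X.\<close>
definition pw :: "var \<Rightarrow> bool \<Rightarrow> lit" where
  "pw v e = (v, e)"

definition valid_var :: "nat \<Rightarrow> nat \<Rightarrow> var \<Rightarrow> bool" where
  "valid_var m r v \<longleftrightarrow> fst v \<in> {1..m} \<and> snd v \<in> {1..r}"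

definition valid_conj :: "nat \<Rightarrow> nat \<Rightarrow> lit set \<Rightarrow> bool" where
  "valid_conj m r D \<longleftrightarrow> (\<forall>l\<in>D. valid_var m r (fst l))"

text \<open>Clause  OR_j P_{i,j}^{1-c_j}  for an r-bit string c (a list, c!(j-1) = c_j).\<close>
definition not_in_clause :: "nat \<Rightarrow> nat \<Rightarrow> bool list \<Rightarrow> lit list" where
  "not_in_clause r i c = map (\<lambda>j. pw (i, j) (\<not> c ! (j - 1))) [1..<r+1]"

text \<open>Binary PHP with pigeons [m], holes [n], bit length r, hole encoding bin,
  where pigeons may go only to holes in H.\<close>
definition bphp_clauses ::
  "nat \<Rightarrow> nat \<Rightarrow> nat \<Rightarrow> (nat \<Rightarrow> bool list) \<Rightarrow> nat set \<Rightarrow> lit list set" where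
  "bphp_clauses m n r bin H =
     {not_in_clause r i (bin a) @ not_in_clause r i' (bin a) | a i i'.
        a \<in> {1..n} \<and> i \<in> {1..m} \<and> i' \<in> {1..m} \<and> i \<noteq> i'}
   \<union> {not_in_clause r i c | i c.
        i \<in> {1..m} \<and> length c = r \<and> (\<forall>a\<in>H. c \<noteq> bin a)}"

datatype constr =
    ClauseLift "lit list" "lit set"
  | NegLift var "lit set"
  | BoundLift lit "lit set"

fun sat_constr :: "(lit set \<Rightarrow> real) \<Rightarrow> constr \<Rightarrow> bool" where
  "sat_constr Z (ClauseLift C D) \<longleftrightarrow> (\<Sum>l\<leftarrow>C. Z (insert l D)) \<ge> Z D"
| "sat_constr Z (NegLift v D) \<longleftrightarrow> Z (insert (v, True) D) + Z (insert (v, False) D) = Z D"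
| "sat_constr Z (BoundLift l D) \<longleftrightarrow> 0 \<le> Z (insert l D) \<and> Z (insert l D) \<le> Z D"

fun constr_terms :: "constr \<Rightarrow> lit set set" where
  "constr_terms (ClauseLift C D) = insert D ((\<lambda>l. insert l D) ` set C)"
| "constr_terms (NegLift v D) = {D, insert (v, True) D, insert (v, False) D}"
| "constr_terms (BoundLift l D) = {D, insert l D}"

fun admissible :: "nat \<Rightarrow> nat \<Rightarrow> lit list set \<Rightarrow> constr \<Rightarrow> bool" where
  "admissible m r F (ClauseLift C D) \<longleftrightarrow> C \<in> F \<and> valid_conj m r D"
| "admissible m r F (NegLift v D) \<longleftrightarrow> valid_var m r v \<and> valid_conj m r D"
| "admissible m r F (BoundLift l D) \<longleftrightarrow> valid_var m r (fst l) \<and> valid_conj m r D"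

definition SA_refutation :: "nat \<Rightarrow> nat \<Rightarrow> lit list set \<Rightarrow> constr set \<Rightarrow> bool" where
  "SA_refutation m r F S \<longleftrightarrow>
     (\<forall>c\<in>S. admissible m r F c) \<and>
     \<not> (\<exists>Z. Z {} = 1 \<and> (\<forall>c\<in>S. sat_constr Z c))"

definition involves :: "constr set \<Rightarrow> lit set \<Rightarrow> bool" where
  "involves S D \<longleftrightarrow> (\<exists>c\<in>S. D \<in> constr_terms c)"

definition mentioned_pigeons :: "lit set \<Rightarrow> nat set" where
  "mentioned_pigeons D = {i. \<exists>j b. ((i, j), b) \<in> D}"

end

theory Submission
  imports Defs "HOL-Library.FuncSet"
begin


definition Inj :: "nat set \<Rightarrow> nat set \<Rightarrow> (nat \<Rightarrow> nat) set" where
  "Inj H B = {g \<in> B \<rightarrow>\<^sub>E H. inj_on g B}"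

lemma finite_Inj: "finite B \<Longrightarrow> finite H \<Longrightarrow> finite (Inj H B)"
  unfolding Inj_def by (rule finite_subset[of _ "B \<rightarrow>\<^sub>E H"]) (auto intro: finite_PiE)

lemma ext_sum:
  fixes \<phi> :: "(nat \<Rightarrow> nat) \<Rightarrow> real"
  assumes fin: "finite B" "finite H" and i: "i \<notin> B" and c: "card B \<le> card H"
  shows "(\<Sum>g\<in>Inj H (insert i B). \<phi> (restrict g B)) = real (card H - card B) * (\<Sum>f\<in>Inj H B. \<phi> f)"
proof -
  let ?F = "\<lambda>(f,h). f(i:=h)"
  let ?Sig = "SIGMA f:Inj H B. H - f ` B"
  have img: "Inj H (insert i B) = ?F ` ?Sig"
  proof
    show "?F ` ?Sig \<subseteq> Inj H (insert i B)"
    proof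
      fix g assume "g \<in> ?F ` ?Sig"
      then obtain f h where f: "f \<in> Inj H B" and h: "h \<in> H - f ` B" and g: "g = f(i:=h)" by auto
      have "g \<in> insert i B \<rightarrow>\<^sub>E H" using f h i unfolding g Inj_def by (auto simp: PiE_def extensional_def)
      moreover have "inj_on g (insert i B)" using f h i unfolding g Inj_def
        by (auto simp: inj_on_def)
      ultimately show "g \<in> Inj H (insert i B)" by (simp add: Inj_def)
    qed
  next
    show "Inj H (insert i B) \<subseteq> ?F ` ?Sig"
    proof
      fix g assume g: "g \<in> Inj H (insert i B)"
      let ?f = "g(i:=undefined)"
      have gP: "g \<in> insert i B \<rightarrow>\<^sub>E H" and gI: "inj_on g (insert i B)" using g unfolding Inj_def by auto
      have "?f \<in> B \<rightarrow>\<^sub>E H"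
      proof (unfold PiE_iff, intro conjI ballI)
        fix x assume "x \<in> B" then show "?f x \<in> H" using gP i by (auto simp: PiE_iff)
      next
        show "?f \<in> extensional B"
        proof (unfold extensional_def, intro CollectI allI impI)
          fix x assume "x \<notin> B" then show "?f x = undefined" using gP
            by (cases "x = i") (auto simp: PiE_iff extensional_def)
        qed
      qed
      moreover have "inj_on ?f B"
      proof -
        have "inj_on g B" using gI by (rule inj_on_subset) auto
        moreover have "\<And>x. x \<in> B \<Longrightarrow> ?f x = g x" using i by auto
        ultimately show ?thesis using inj_on_cong by (metis (no_types, lifting))
      qed
      ultimately have "?f \<in> Inj H B" unfolding Inj_def by simp
      moreover have "g i \<in> H - ?f ` B"
      proof -
        have gi: "g i \<in> H" using g unfolding Inj_def by auto
        have "g i \<notin> g ` B" using g i unfolding Inj_def by auto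
        moreover have "?f ` B = g ` B" using i by auto
        ultimately show ?thesis using gi by simp
      qed
      moreover have "g = ?F (?f, g i)" by simp
      ultimately show "g \<in> ?F ` ?Sig" by blast
    qed
  qed
  have inj: "inj_on ?F ?Sig"
  proof (rule inj_onI, clarify)
    fix f h f' h'
    assume f: "f \<in> Inj H B" and f': "f' \<in> Inj H B" and e: "f(i := h) = f'(i := h')"
    have "h = h'" using fun_cong[OF e, of i] by simp
    moreover have "f = f'"
    proof
      fix x show "f x = f' x"
      proof (cases "x = i")
        case True
        then have "x \<notin> B" using i by simp
        then show ?thesis using f f' unfolding Inj_def by (auto simp: PiE_def extensional_def)
      next
        case False then show ?thesis using fun_cong[OF e, of x] by simp
      qed
    qed
    ultimately show "f = f' \<and> h = h'" by simp
  qed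
  have finS: "finite ?Sig" using fin finite_Inj by (auto intro!: finite_SigmaI)
  have "(\<Sum>g\<in>Inj H (insert i B). \<phi> (restrict g B)) = (\<Sum>p\<in>?Sig. \<phi> (restrict (?F p) B))"
    unfolding img by (subst sum.reindex[OF inj]) (simp add: comp_def)
  also have "\<dots> = (\<Sum>f\<in>Inj H B. \<Sum>h\<in>H - f`B. \<phi> (restrict (f(i:=h)) B))"
    using fin finite_Inj by (subst sum.Sigma) (auto simp: case_prod_unfold)
  also have "\<dots> = (\<Sum>f\<in>Inj H B. \<Sum>h\<in>H - f`B. \<phi> f)"
  proof (rule sum.cong[OF refl], rule sum.cong[OF refl])
    fix f h assume f: "f \<in> Inj H B"
    have "restrict (f(i:=h)) B = f"
    proof
      fix x show "restrict (f(i:=h)) B x = f x"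
      proof (cases "x \<in> B")
        case True then show ?thesis using i by auto
      next
        case False
        then have "f x = undefined" using f unfolding Inj_def by (auto simp: PiE_iff extensional_def)
        then show ?thesis using False by simp
      qed
    qed
    then show "\<phi> (restrict (f(i:=h)) B) = \<phi> f" by simp
  qed
  also have "\<dots> = (\<Sum>f\<in>Inj H B. real (card H - card B) * \<phi> f)"
  proof (rule sum.cong[OF refl])
    fix f assume f: "f \<in> Inj H B"
    have sub: "f ` B \<subseteq> H" using f unfolding Inj_def by auto
    have "card (f ` B) = card B" using f unfolding Inj_def by (simp add: card_image)
    then have "card (H - f ` B) = card H - card B"
      using sub fin by (simp add: card_Diff_subset finite_subset)
    then show "(\<Sum>h\<in>H - f`B. \<phi> f) = real (card H - card B) * \<phi> f" by simp
  qed
  also have "\<dots> = real (card H - card B) * (\<Sum>f\<in>Inj H B. \<phi> f)"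
    by (simp add: sum_distrib_left)
  finally show ?thesis .
qed


definition satg :: "(nat \<Rightarrow> bool list) \<Rightarrow> (nat \<Rightarrow> nat) \<Rightarrow> lit set \<Rightarrow> bool" where
  "satg bin g E = (\<forall>x\<in>E. bin (g (fst (fst x))) ! (snd (fst x) - 1) = snd x)"

definition ind :: "bool \<Rightarrow> real" where "ind b = (if b then 1 else 0)"

definition avg :: "(nat \<Rightarrow> bool list) \<Rightarrow> nat set \<Rightarrow> nat set \<Rightarrow> lit set \<Rightarrow> real" where
  "avg bin H B E = (\<Sum>g\<in>Inj H B. ind (satg bin g E)) / real (card (Inj H B))"

lemma mp_insert: "mentioned_pigeons (insert l D) = insert (fst (fst l)) (mentioned_pigeons D)"
  unfolding mentioned_pigeons_def by (cases l) (auto, metis prod.collapse)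

lemma mp_empty: "mentioned_pigeons {} = {}"
  unfolding mentioned_pigeons_def by auto

lemma satg_restrict:
  assumes "mentioned_pigeons E \<subseteq> B"
  shows "satg bin (restrict g B) E = satg bin g E"
proof -
  have "\<And>x. x \<in> E \<Longrightarrow> fst (fst x) \<in> B"
    using assms unfolding mentioned_pigeons_def by (metis (mono_tags, lifting) mem_Collect_eq prod.collapse subsetD)
  then show ?thesis unfolding satg_def by auto
qed

lemma avg_step:
  assumes "finite B" "finite H" "i \<notin> B" "card B < card H" "mentioned_pigeons E \<subseteq> B"
  shows "avg bin H (insert i B) E = avg bin H B E"
proof -
  define k where "k = real (card H - card B)"
  have kpos: "k > 0" using assms(4) unfolding k_def by simp
  have "(\<Sum>g\<in>Inj H (insert i B). ind (satg bin g E)) = (\<Sum>g\<in>Inj H (insert i B). ind (satg bin (restrict g B) E))"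
    using satg_restrict[OF assms(5)] by simp
  also have "\<dots> = k * (\<Sum>f\<in>Inj H B. ind (satg bin f E))"
    unfolding k_def by (rule ext_sum[where \<phi> = "\<lambda>f. ind (satg bin f E)"]) (use assms in auto)
  finally have num: "(\<Sum>g\<in>Inj H (insert i B). ind (satg bin g E)) = k * (\<Sum>f\<in>Inj H B. ind (satg bin f E))" .
  have "real (card (Inj H (insert i B))) = (\<Sum>g\<in>Inj H (insert i B). (\<lambda>_. 1::real) (restrict g B))" by simp
  also have "\<dots> = k * (\<Sum>f\<in>Inj H B. (\<lambda>_. 1::real) f)"
    unfolding k_def by (rule ext_sum) (use assms in auto)
  finally have den: "real (card (Inj H (insert i B))) = k * real (card (Inj H B))" by simp
  show ?thesis unfolding avg_def num den using kpos by simp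
qed

lemma avg_union:
  assumes "finite F" "finite B" "finite H" "card (B \<union> F) \<le> card H" "mentioned_pigeons E \<subseteq> B"
  shows "avg bin H (B \<union> F) E = avg bin H B E"
  using assms
proof (induction F rule: finite_induct)
  case empty then show ?case by simp
next
  case (insert x F)
  show ?case
  proof (cases "x \<in> B \<union> F")
    case True
    then have "B \<union> insert x F = B \<union> F" by auto
    then show ?thesis using insert by simp
  next
    case False
    have eq: "B \<union> insert x F = insert x (B \<union> F)" by auto
    have "card (insert x (B \<union> F)) = Suc (card (B \<union> F))" using False insert by simp
    then have lt: "card (B \<union> F) < card H" using insert(6) eq by simp
    have "avg bin H (B \<union> insert x F) E = avg bin H (B \<union> F) E"
      unfolding eq by (rule avg_step) (use insert False lt in auto)
    also have "\<dots> = avg bin H B E" using insert lt by simp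
    finally show ?thesis .
  qed
qed

lemma avg_sub:
  assumes "mentioned_pigeons E \<subseteq> B" "B \<subseteq> B'" "finite B'" "finite H" "card B' \<le> card H"
  shows "avg bin H B' E = avg bin H B E"
proof -
  have "B' = B \<union> (B' - B)" using assms(2) by auto
  then show ?thesis using avg_union[where F="B' - B" and B=B and H=H and bin=bin and E=E] assms by (metis finite_Diff finite_subset)
qed

lemma avg_empty: "avg bin H {} {} = 1"
proof -
  have "Inj H {} = {\<lambda>x. undefined}" unfolding Inj_def by auto
  then show ?thesis unfolding avg_def satg_def ind_def by simp
qed

lemma avg_nonneg: "0 \<le> avg bin H B E"
  unfolding avg_def ind_def by (auto intro!: divide_nonneg_nonneg sum_nonneg)



lemma nic_set: "set (not_in_clause r i c) = (\<lambda>j. ((i, j), \<not> c ! (j - 1))) ` {1..<r+1}"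
  unfolding not_in_clause_def pw_def by auto

lemma nic_unsat:
  assumes "\<forall>l\<in>set (not_in_clause r i c). \<not> satg bin g {l}"
    and "length (bin (g i)) = r" and "length c = r"
  shows "bin (g i) = c"
proof (rule nth_equalityI)
  show "length (bin (g i)) = length c" using assms by simp
next
  fix k assume k: "k < length (bin (g i))"
  have "((i, k+1), \<not> c ! k) \<in> set (not_in_clause r i c)"
    unfolding nic_set using k assms(2) by (auto intro!: image_eqI[where x="k+1"])
  then have "\<not> satg bin g {((i, k+1), \<not> c ! k)}" using assms(1) by blast
  then show "bin (g i) ! k = c ! k" unfolding satg_def by auto
qed

lemma nic_pigs: "fst ` fst ` set (not_in_clause r i c) \<subseteq> {i}"
  unfolding nic_set by auto

lemma nic_pig_in: "r \<ge> 1 \<Longrightarrow> i \<in> fst ` fst ` set (not_in_clause r i c)"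
  unfolding nic_set by (rule image_eqI[where x="(i,1)"]) (auto intro!: image_eqI[where x="((i,1), \<not> c ! 0)"])

lemma clause_pigs:
  assumes "C \<in> bphp_clauses m n r bin H"
  shows "\<exists>p q. fst ` fst ` set C \<subseteq> {p, q}"
  using assms unfolding bphp_clauses_def
proof (elim UnE CollectE exE conjE)
  fix a i i' assume "C = not_in_clause r i (bin a) @ not_in_clause r i' (bin a)"
  then have e: "fst ` fst ` set C = fst ` fst ` set (not_in_clause r i (bin a)) \<union> fst ` fst ` set (not_in_clause r i' (bin a))"
    by (simp add: image_Un)
  have "fst ` fst ` set C \<subseteq> {i, i'}" unfolding e using nic_pigs[of r i "bin a"] nic_pigs[of r i' "bin a"] by blast
  then show ?thesis by blast
next
  fix i c assume "C = not_in_clause r i c"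
  then have "fst ` fst ` set C \<subseteq> {i, i}" using nic_pigs[of r i c] by auto
  then show ?thesis by blast
qed

lemma clause_sat:
  assumes C: "C \<in> bphp_clauses m n r bin H" and r: "r \<ge> 1"
    and H: "H \<subseteq> {1..n}" and len: "\<forall>a\<in>{1..n}. length (bin a) = r" and binj: "inj_on bin {1..n}"
    and g: "g \<in> Inj H U" and U: "fst ` fst ` set C \<subseteq> U"
  shows "\<exists>l\<in>set C. satg bin g {l}"
proof (rule ccontr)
  assume ns: "\<not> (\<exists>l\<in>set C. satg bin g {l})"
  have gH: "\<And>x. x \<in> U \<Longrightarrow> g x \<in> H" using g unfolding Inj_def by auto
  have gi: "inj_on g U" using g unfolding Inj_def by auto
  show False using C unfolding bphp_clauses_def
  proof (elim UnE CollectE exE conjE)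
    fix a i i' assume Ce: "C = not_in_clause r i (bin a) @ not_in_clause r i' (bin a)"
      and a: "a \<in> {1..n}" and ii: "i \<noteq> i'"
    have iU: "i \<in> U" using U nic_pig_in[OF r, of i "bin a"] unfolding Ce by auto
    have i'U: "i' \<in> U" using U nic_pig_in[OF r, of i' "bin a"] unfolding Ce by auto
    have "bin (g i) = bin a"
      by (rule nic_unsat) (use ns Ce gH[OF iU] H len a in auto)
    then have e1: "g i = a" using binj gH[OF iU] H a by (auto dest: inj_onD)
    have "bin (g i') = bin a"
      by (rule nic_unsat) (use ns Ce gH[OF i'U] H len a in auto)
    then have e2: "g i' = a" using binj gH[OF i'U] H a by (auto dest: inj_onD)
    show False using e1 e2 gi iU i'U ii by (auto dest: inj_onD)
  next
    fix i c assume Ce: "C = not_in_clause r i c" and lc: "length c = r" and nb: "\<forall>a\<in>H. c \<noteq> bin a"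
    have iU: "i \<in> U" using U nic_pig_in[OF r, of i c] unfolding Ce by auto
    have "bin (g i) = c"
      by (rule nic_unsat) (use ns Ce gH[OF iU] H len lc in auto)
    then show False using nb gH[OF iU] by auto
  qed
qed

lemma card_bound:
  assumes "finite A" "X \<subseteq> {p, q}" "card A < s" "\<forall>x\<in>X. card (insert x A) < s"
  shows "card (A \<union> X) \<le> s"
proof (cases "X \<subseteq> A")
  case True then show ?thesis using assms by (simp add: Un_absorb2)
next
  case False
  then obtain x where x: "x \<in> X" "x \<notin> A" by auto
  then have "Suc (card A) < s" using assms(4) card_insert_disjoint[OF assms(1) x(2)] by auto
  moreover have "card (A \<union> X) \<le> card A + card X" by (rule card_Un_le)
  moreover have "card X \<le> 2"
  proof -
    have "card X \<le> card {p, q}" by (rule card_mono) (use assms(2) in auto)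
    also have "\<dots> \<le> 2" by (cases "p = q") auto
    finally show ?thesis .
  qed
  ultimately show ?thesis by linarith
qed

lemma sum_list_div: "(\<Sum>l\<leftarrow>C. f l / (N::real)) = (\<Sum>l\<leftarrow>C. f l) / N"
  by (induction C) (auto simp: add_divide_distrib)

lemma sum_list_swap: "(\<Sum>l\<leftarrow>C. \<Sum>g\<in>A. f g l) = (\<Sum>g\<in>A. \<Sum>l\<leftarrow>C. (f g l :: real))"
  by (induction C) (auto simp: sum.distrib)

lemma mem_le_sum_list: "x \<in> set xs \<Longrightarrow> (\<forall>y\<in>set xs. (0::real) \<le> y) \<Longrightarrow> x \<le> sum_list xs"
  by (induction xs) (auto intro: add_increasing add_increasing2 sum_list_nonneg)



lemma r_pos:
  assumes "n \<ge> 2" "r = nat \<lceil>log 2 (real n)\<rceil>"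
  shows "r \<ge> 1"
proof -
  have "log 2 (real n) > 0" using assms(1) by simp
  then have "\<lceil>log 2 (real n)\<rceil> \<ge> 1" by (simp add: one_le_ceiling) 
  then have "nat \<lceil>log 2 (real n)\<rceil> \<ge> nat 1" by (rule nat_mono)
  then show ?thesis using assms(2) by simp
qed

theorem lemma2:
  fixes m n r :: nat and H :: "nat set" and bin :: "nat \<Rightarrow> bool list"
    and S :: "constr set"
  assumes "m \<ge> 1" and "n \<ge> 2"
    and "r = nat \<lceil>log 2 (real n)\<rceil>"
    and "H \<subseteq> {1..n}"
    and "\<forall>a\<in>{1..n}. length (bin a) = r" and "inj_on bin {1..n}"
    and "SA_refutation m r (bphp_clauses m n r bin H) S"
  shows "\<exists>D. involves S D \<and> card (mentioned_pigeons D) \<ge> card H"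
proof (rule ccontr)
  assume hne: "\<not> ?thesis"
  let ?P = mentioned_pigeons
  let ?F = "bphp_clauses m n r bin H"
  have small: "\<And>c T. c \<in> S \<Longrightarrow> T \<in> constr_terms c \<Longrightarrow> card (?P T) < card H"
    using hne unfolding involves_def by (meson not_le)
  have r1: "r \<ge> 1" using r_pos assms(2,3) by blast
  have finH: "finite H" using assms(4) finite_subset by blast
  have vfin: "\<And>D. valid_conj m r D \<Longrightarrow> finite (?P D)"
  proof -
    fix D assume v: "valid_conj m r D"
    have "?P D \<subseteq> {1..m}"
    proof (intro subsetI)
      fix i assume "i \<in> ?P D"
      then obtain j b where jb: "((i,j),b) \<in> D" unfolding mentioned_pigeons_def by auto
      then have "valid_var m r (i,j)" using v unfolding valid_conj_def by fastforce
      then show "i \<in> {1..m}" unfolding valid_var_def by simp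
    qed
    then show "finite (?P D)" using finite_subset by blast
  qed
  define Z where "Z D = (if finite (?P D) \<and> card (?P D) \<le> card H then avg bin H (?P D) D else 0)" for D
  have ZT: "\<And>T U. finite (?P T) \<Longrightarrow> card (?P T) \<le> card H \<Longrightarrow> ?P T \<subseteq> U \<Longrightarrow> finite U \<Longrightarrow> card U \<le> card H
     \<Longrightarrow> Z T = avg bin H U T"
  proof -
    fix T U assume a: "finite (?P T)" "card (?P T) \<le> card H" "?P T \<subseteq> U" "finite U" "card U \<le> card H"
    show "Z T = avg bin H U T" unfolding Z_def using a avg_sub[OF order_refl a(3) a(4) finH a(5)] by simp
  qed
  have Z0: "Z {} = 1" unfolding Z_def mp_empty using avg_empty by simp
  have "\<forall>c\<in>S. sat_constr Z c"
  proof
    fix c assume cS: "c \<in> S"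
    have adm: "admissible m r ?F c" using cS assms(7) unfolding SA_refutation_def by blast
    have sm: "\<And>T. T \<in> constr_terms c \<Longrightarrow> card (?P T) < card H" using small cS by blast
    show "sat_constr Z c"
    proof (cases c)
      case (BoundLift l D)
      let ?U = "?P (insert l D)"
      have fD: "finite (?P D)" using adm vfin BoundLift by simp
      have fU: "finite ?U" using fD mp_insert by simp
      have cU: "card ?U < card H" using sm BoundLift by simp
      have cD: "card (?P D) < card H" using sm BoundLift by simp
      have sub: "?P D \<subseteq> ?U" using mp_insert by auto
      have z1: "Z (insert l D) = avg bin H ?U (insert l D)" using ZT fU cU by simp
      have z2: "Z D = avg bin H ?U D" using ZT[OF fD _ sub fU] cU cD by simp
      have "avg bin H ?U (insert l D) \<le> avg bin H ?U D"
        unfolding avg_def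
        by (rule divide_right_mono, rule sum_mono) (auto simp: ind_def satg_def)
      then show ?thesis using BoundLift z1 z2 avg_nonneg by simp
    next
      case (NegLift v D)
      let ?U = "insert (fst v) (?P D)"
      have fD: "finite (?P D)" using adm vfin NegLift by simp
      have fU: "finite ?U" using fD by simp
      have cU: "card ?U < card H" using sm[of "insert (v, True) D"] NegLift mp_insert by simp
      have cD: "card (?P D) < card H" using sm NegLift by simp
      have z1: "Z (insert (v, True) D) = avg bin H ?U (insert (v, True) D)" using ZT fU cU mp_insert by simp
      have z2: "Z (insert (v, False) D) = avg bin H ?U (insert (v, False) D)" using ZT fU cU mp_insert by simp
      have z3: "Z D = avg bin H ?U D" using ZT[OF fD _ _ fU] cU cD by auto
      have "avg bin H ?U (insert (v, True) D) + avg bin H ?U (insert (v, False) D) = avg bin H ?U D"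
        unfolding avg_def add_divide_distrib[symmetric] sum.distrib[symmetric]
        by (rule arg_cong[where f="\<lambda>x. x / _"], rule sum.cong) (auto simp: ind_def satg_def)
      then show ?thesis using NegLift z1 z2 z3 by simp
    next
      case (ClauseLift C D)
      have CF: "C \<in> ?F" using adm ClauseLift by simp
      let ?U = "?P D \<union> fst ` fst ` set C"
      have fD: "finite (?P D)" using adm vfin ClauseLift by simp
      have fU: "finite ?U" using fD by simp
      have cD: "card (?P D) < card H" using sm ClauseLift by simp
      have cl: "\<forall>x\<in>fst ` fst ` set C. card (insert x (?P D)) < card H"
      proof
        fix x assume "x \<in> fst ` fst ` set C"
        then obtain l where l: "l \<in> set C" "x = fst (fst l)" by auto
        then have "insert l D \<in> constr_terms c" using ClauseLift by simp
        then have "card (?P (insert l D)) < card H" using sm by blast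
        then show "card (insert x (?P D)) < card H" using l(2) by (simp add: mp_insert)
      qed
      obtain p q where pq: "fst ` fst ` set C \<subseteq> {p, q}" using clause_pigs[OF CF] by blast
      have cU: "card ?U \<le> card H" by (rule card_bound[OF fD pq cD cl])
      have z1: "\<And>l. l \<in> set C \<Longrightarrow> Z (insert l D) = avg bin H ?U (insert l D)"
      proof -
        fix l assume l: "l \<in> set C"
        have "card (?P (insert l D)) < card H" using sm ClauseLift l by simp
        moreover have fin: "finite (?P (insert l D))" by (simp add: mp_insert fD)
        moreover have sub: "?P (insert l D) \<subseteq> ?U" using l by (auto simp: mp_insert)
        ultimately show "Z (insert l D) = avg bin H ?U (insert l D)"
          using ZT[OF fin _ sub fU cU] by simp
      qed
      have z2: "Z D = avg bin H ?U D" using ZT[OF fD _ _ fU cU] cD by simp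
      have "(\<Sum>l\<leftarrow>C. Z (insert l D)) = (\<Sum>l\<leftarrow>C. avg bin H ?U (insert l D))"
      proof -
        have "map (\<lambda>l. Z (insert l D)) C = map (\<lambda>l. avg bin H ?U (insert l D)) C"
          by (rule map_cong[OF refl]) (rule z1)
        then show ?thesis by (rule arg_cong[where f = sum_list])
      qed
      also have "\<dots> = (\<Sum>g\<in>Inj H ?U. \<Sum>l\<leftarrow>C. ind (satg bin g (insert l D))) / real (card (Inj H ?U))"
        by (simp only: avg_def sum_list_div sum_list_swap)
      also have "\<dots> \<ge> avg bin H ?U D"
        unfolding avg_def
      proof (rule divide_right_mono, rule sum_mono)
        fix g assume g: "g \<in> Inj H ?U"
        show "ind (satg bin g D) \<le> (\<Sum>l\<leftarrow>C. ind (satg bin g (insert l D)))"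
        proof (cases "satg bin g D")
          case False then show ?thesis by (auto simp: ind_def intro!: sum_list_nonneg)
        next
          case True
          obtain l where l: "l \<in> set C" "satg bin g {l}"
            using clause_sat[OF CF r1 assms(4,5,6) g] by blast
          have "satg bin g (insert l D)" using True l(2) unfolding satg_def by auto
          then have e: "ind (satg bin g D) = ind (satg bin g (insert l D))" using True by simp
          have "ind (satg bin g (insert l D)) \<in> (\<lambda>l. ind (satg bin g (insert l D))) ` set C"
            using l(1) by (rule imageI)
          then have "ind (satg bin g D) \<in> set (map (\<lambda>l. ind (satg bin g (insert l D))) C)"
            unfolding e set_map .
          then show ?thesis by (rule mem_le_sum_list) (auto simp: ind_def)
        qed
      qed simp
      finally show ?thesis using ClauseLift z2 by simp
    qed
  qed
  then show False using Z0 assms(7) unfolding SA_refutation_def by blast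
qed

end
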